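(* For every integer $n\ge 2$ and every integer $k\ge 3$, $\chi_i(S_{C_k}^n)=3$, where $C_k$ is the cycle on $k$ vertices.
   Context: For a graph $H$, an injective $k$-coloring is a map $f:V(H)\to\{1,\dots,k\}$ such that any two distinct vertices $u,w$ with $f(u)=f(w)$ have no common neighbor; $\chi_i(H)$ is the least such $k$. For a graph $G$ and positive integer $n$, the generalized Sierpiński graph $S_G^n$ has vertex set $V(G)^n$, and $(u_1,\dots,u_n)$, $(v_1,\dots,v_n)$ are adjacent if and only if there is $d\in\{1,\dots,n\}$ with $u_i=v_i$ for $i<d$, $u_dv_d\in E(G)$, and $u_i=v_d$, $v_i=u_d$ for all $i>d$. *)

theory Defs
  imports Main
begin

(* A graph is given by a vertex set V and a symmetric irreflexive adjacency relation E. *)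

definition injective_coloring ::
  "'v set \<Rightarrow> ('v \<Rightarrow> 'v \<Rightarrow> bool) \<Rightarrow> nat \<Rightarrow> ('v \<Rightarrow> nat) \<Rightarrow> bool" where
  "injective_coloring V E k f \<longleftrightarrow>
     (\<forall>v\<in>V. f v \<in> {1..k}) \<and>
     (\<forall>u\<in>V. \<forall>w\<in>V. u \<noteq> w \<and> f u = f w \<longrightarrow> \<not> (\<exists>x\<in>V. E x u \<and> E x w))"

definition injective_chromatic_number :: "'v set \<Rightarrow> ('v \<Rightarrow> 'v \<Rightarrow> bool) \<Rightarrow> nat" where
  "injective_chromatic_number V E = (LEAST k. \<exists>f. injective_coloring V E k f)"

definition cycle_verts :: "nat \<Rightarrow> nat set" where
  "cycle_verts k = {0..<k}"

definition cycle_adj :: "nat \<Rightarrow> nat \<Rightarrow> nat \<Rightarrow> bool" where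
  "cycle_adj k i j \<longleftrightarrow> i \<in> {0..<k} \<and> j \<in> {0..<k} \<and> i \<noteq> j \<and>
      (j = (i + 1) mod k \<or> i = (j + 1) mod k)"

(* Generalized Sierpinski graph S_G^n: vertices are words of length n over V(G);
   positions 1..n of the paper correspond to list indices 0..n-1. *)
definition sierpinski_verts :: "'a set \<Rightarrow> nat \<Rightarrow> 'a list set" where
  "sierpinski_verts V n = {u. length u = n \<and> set u \<subseteq> V}"

definition sierpinski_adj :: "('a \<Rightarrow> 'a \<Rightarrow> bool) \<Rightarrow> nat \<Rightarrow> 'a list \<Rightarrow> 'a list \<Rightarrow> bool" where
  "sierpinski_adj E n u v \<longleftrightarrow> length u = n \<and> length v = n \<and>
     (\<exists>d<n. (\<forall>i<d. u ! i = v ! i) \<and> E (u ! d) (v ! d) \<and>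
            (\<forall>i. d < i \<and> i < n \<longrightarrow> u ! i = v ! d \<and> v ! i = u ! d))"

end

theory Submission
  imports Defs
begin

lemma form1:
  assumes "length u = length P + 1 + j"
    and "\<forall>i<length P. u!i = P!i" and "u!(length P) = a"
    and "\<forall>i. length P < i \<and> i < length u \<longrightarrow> u!i = b"
  shows "u = P @ a # replicate j b"
proof (rule nth_equalityI)
  show "length u = length (P @ a # replicate j b)" using assms(1) by simp
  fix i assume i: "i < length u"
  consider "i < length P" | "i = length P" | "length P < i" by linarith
  then show "u ! i = (P @ a # replicate j b) ! i"
  proof cases
    case 1 then show ?thesis using assms(2) by (simp add: nth_append)
  next
    case 2 then show ?thesis using assms(3) by (simp add: nth_append)
  next
    case 3 
    then have "(P @ a # replicate j b) ! i = b" using i assms(1)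
      by (simp add: nth_append nth_Cons')
    then show ?thesis using assms(4) 3 i by simp
  qed
qed

lemma form2:
  assumes "length u = length P + 1 + j" "j \<ge> 1"
    and "\<forall>i<length P. u!i = P!i" and "u!(length P) = a"
    and "\<forall>i. length P < i \<and> i < length u - 1 \<longrightarrow> u!i = b"
    and "u ! (length u - 1) = c"
  shows "u = P @ a # replicate (j-1) b @ [c]"
proof (rule nth_equalityI)
  show "length u = length (P @ a # replicate (j-1) b @ [c])" using assms(1,2) by simp
  fix i assume i: "i < length u"
  consider "i < length P" | "i = length P" | "length P < i \<and> i < length u - 1" | "i = length u - 1" using i by linarith
  then show "u ! i = (P @ a # replicate (j-1) b @ [c]) ! i"
  proof cases
    case 1 then show ?thesis using assms(3) by (simp add: nth_append)
  next
    case 2 then show ?thesis using assms(4) by (simp add: nth_append)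
  next
    case 3 
    then have "i - Suc (length P) < j - 1" using assms(1) by linarith
    then have "(P @ a # replicate (j-1) b @ [c]) ! i = b" using i assms(1,2) 3
      by (simp add: nth_append nth_Cons')
    then show ?thesis using assms(5) 3 i by simp
  next
    case 4
    then have "(P @ a # replicate (j-1) b @ [c]) ! i = c" using i assms(1,2)
      by (simp add: nth_append nth_Cons')
    then show ?thesis using assms(6) 4 by simp
  qed
qed

lemma mixed:
  assumes z: "length z = n" "set z \<subseteq> L" and x: "length x = n" and y: "length y = n"
    and d1: "d1 < n - 1" "\<forall>i<d1. z!i = x!i" "G (z!d1) (x!d1)"
       "\<forall>i. d1 < i \<and> i < n \<longrightarrow> z!i = x!d1 \<and> x!i = z!d1"
    and d2: "\<forall>i<n-1. z!i = y!i" "G (z!(n-1)) (y!(n-1))"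
    and HB: "\<forall>P a b c j. length P + 1 + j = n \<longrightarrow> 1 \<le> j \<longrightarrow> set P \<subseteq> L \<longrightarrow> G a b \<longrightarrow> G b c
              \<longrightarrow> f (P @ b # replicate j a) \<noteq> f (P @ a # replicate (j-1) b @ [c])"
  shows "f x \<noteq> f y"
proof -
  define P where "P = take d1 z"
  define j where "j = n - 1 - d1"
  have lP: "length P = d1" using z d1 by (simp add: P_def)
  have sP: "set P \<subseteq> L" using z(2) set_take_subset[of d1 z] unfolding P_def by blast
  have Pn: "\<forall>i<d1. P!i = z!i" by (simp add: P_def)
  have xe: "x = P @ (x!d1) # replicate j (z!d1)"
    by (rule form1) (use x lP Pn d1 in \<open>auto simp: j_def\<close>)
  have ye: "y = P @ (z!d1) # replicate (j-1) (x!d1) @ [y!(n-1)]"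
    by (rule form2) (use y lP Pn d1 d2 in \<open>auto simp: j_def\<close>)
  have zl: "z!(n-1) = x!d1" using d1 by auto
  have "f (P @ (x!d1) # replicate j (z!d1)) \<noteq> f (P @ (z!d1) # replicate (j-1) (x!d1) @ [y!(n-1)])"
    using HB[rule_format, of P j "z!d1" "x!d1" "y!(n-1)"] lP sP d1 d2 zl by (auto simp: j_def)
  then show ?thesis using xe ye by metis
qed


lemma pairwise:
  assumes n: "n \<ge> 2" and irr: "\<forall>a. \<not> G a a"
    and z: "length z = n" "set z \<subseteq> L" and x: "length x = n" and y: "length y = n"
    and xy: "x \<noteq> y" and zx: "sierpinski_adj G n z x" and zy: "sierpinski_adj G n z y"
    and HA: "\<forall>w b c1 c2. length w + 1 = n \<longrightarrow> set w \<subseteq> L \<longrightarrow> G b c1 \<longrightarrow> G b c2 \<longrightarrow> c1 \<noteq> c2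
              \<longrightarrow> f (w @ [c1]) \<noteq> f (w @ [c2])"
    and HB: "\<forall>P a b c j. length P + 1 + j = n \<longrightarrow> 1 \<le> j \<longrightarrow> set P \<subseteq> L \<longrightarrow> G a b \<longrightarrow> G b c
              \<longrightarrow> f (P @ b # replicate j a) \<noteq> f (P @ a # replicate (j-1) b @ [c])"
  shows "f x \<noteq> f y"
proof -
  obtain d1 where d1: "d1 < n" "\<forall>i<d1. z!i = x!i" "G (z!d1) (x!d1)"
       "\<forall>i. d1 < i \<and> i < n \<longrightarrow> z!i = x!d1 \<and> x!i = z!d1"
    using zx unfolding sierpinski_adj_def by blast
  obtain d2 where d2: "d2 < n" "\<forall>i<d2. z!i = y!i" "G (z!d2) (y!d2)"
       "\<forall>i. d2 < i \<and> i < n \<longrightarrow> z!i = y!d2 \<and> y!i = z!d2"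
    using zy unfolding sierpinski_adj_def by blast
  consider "d1 = n-1" "d2 = n-1" | "d1 < n-1" "d2 = n-1" | "d1 = n-1" "d2 < n-1" | "d1 < n-1" "d2 < n-1"
    using d1(1) d2(1) by linarith
  then show ?thesis
  proof cases
    case 1
    define w where "w = take (n-1) z"
    have lw: "length w + 1 = n" using z n by (simp add: w_def)
    have sw: "set w \<subseteq> L" using z(2) set_take_subset[of "n-1" z] unfolding w_def by blast
    have "x = w @ x!(n-1) # replicate 0 (x!0)"
    proof (rule form1)
      show "length x = length w + 1 + 0" using x lw by simp
      show "\<forall>i<length w. x ! i = w ! i" using d1(2) 1 lw by (simp add: w_def)
      have "length w = n - 1" using lw by simp
      then show "x ! length w = x ! (n - 1)" by simp
      show "\<forall>i. length w < i \<and> i < length x \<longrightarrow> x ! i = x ! 0" using lw x by auto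
    qed
    then have xe: "x = w @ [x!(n-1)]" by simp
    have "y = w @ y!(n-1) # replicate 0 (y!0)"
    proof (rule form1)
      show "length y = length w + 1 + 0" using y lw by simp
      show "\<forall>i<length w. y ! i = w ! i" using d2(2) 1 lw by (simp add: w_def)
      have "length w = n - 1" using lw by simp
      then show "y ! length w = y ! (n - 1)" by simp
      show "\<forall>i. length w < i \<and> i < length y \<longrightarrow> y ! i = y ! 0" using lw y by auto
    qed
    then have ye: "y = w @ [y!(n-1)]" by simp
    have ne: "x!(n-1) \<noteq> y!(n-1)" using xe ye xy by metis
    have "f (w @ [x!(n-1)]) \<noteq> f (w @ [y!(n-1)])"
      using HA[rule_format, OF lw sw _ _ ne, of "z!(n-1)"] d1 d2 1 by simp
    then show ?thesis using xe ye by metis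
  next
    case 2
    show ?thesis by (rule mixed[OF z x y 2(1) d1(2-4) _ _ HB]) (use d2 2 in auto)
  next
    case 3
    have "f y \<noteq> f x" by (rule mixed[OF z y x 3(2) d2(2-4) _ _ HB]) (use d1 3 in auto)
    then show ?thesis by metis
  next
    case 4
    show ?thesis
    proof (cases "d1 = d2")
      case True
      have "x = y"
      proof (rule nth_equalityI)
        show "length x = length y" using x y by simp
        fix i assume i: "i < length x"
        have e1: "x!d1 = z!(n-1)" using d1 4 by auto
        have e2: "y!d2 = z!(n-1)" using d2 4 by auto
        consider "i < d1" | "i = d1" | "d1 < i" by linarith
        then show "x!i = y!i"
        proof cases
          case 1 then show ?thesis using d1 d2 True by auto
        next
          case 2 then show ?thesis using e1 e2 True by simp
        next
          case 3 then show ?thesis using d1(4) d2(4) True i x by auto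
        qed
      qed
      then show ?thesis using xy by simp
    next
      case False
      show ?thesis
      proof (cases "d1 < d2")
        case True
        have "z!d2 = x!d1" using d1(4) True d2(1) by auto
        moreover have "z!(n-1) = x!d1" using d1(4) 4 by auto
        moreover have "z!(n-1) = y!d2" using d2(4) 4 by auto
        ultimately show ?thesis using d2(3) irr by metis
      next
        case F2: False
        then have T: "d2 < d1" using False by linarith
        have "z!d1 = y!d2" using d2(4) T d1(1) by auto
        moreover have "z!(n-1) = y!d2" using d2(4) 4 by auto
        moreover have "z!(n-1) = x!d1" using d1(4) 4 by auto
        ultimately show ?thesis using d1(3) irr by metis
      qed
    qed
  qed
qed

lemma generic:
  assumes n: "n \<ge> 2" and irr: "\<forall>a. \<not> G a a"
    and range: "\<forall>v \<in> sierpinski_verts L n. f v \<in> {1..m}"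
    and HA: "\<forall>w b c1 c2. length w + 1 = n \<longrightarrow> set w \<subseteq> L \<longrightarrow> G b c1 \<longrightarrow> G b c2 \<longrightarrow> c1 \<noteq> c2
              \<longrightarrow> f (w @ [c1]) \<noteq> f (w @ [c2])"
    and HB: "\<forall>P a b c j. length P + 1 + j = n \<longrightarrow> 1 \<le> j \<longrightarrow> set P \<subseteq> L \<longrightarrow> G a b \<longrightarrow> G b c
              \<longrightarrow> f (P @ b # replicate j a) \<noteq> f (P @ a # replicate (j-1) b @ [c])"
  shows "injective_coloring (sierpinski_verts L n) (sierpinski_adj G n) m f"
  unfolding injective_coloring_def
proof (intro conjI ballI impI)
  fix v assume "v \<in> sierpinski_verts L n" then show "f v \<in> {1..m}" using range by blast
next
  fix u w assume u: "u \<in> sierpinski_verts L n" and w: "w \<in> sierpinski_verts L n"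
    and uw: "u \<noteq> w \<and> f u = f w"
  show "\<not> (\<exists>x\<in>sierpinski_verts L n. sierpinski_adj G n x u \<and> sierpinski_adj G n x w)"
  proof
    assume "\<exists>x\<in>sierpinski_verts L n. sierpinski_adj G n x u \<and> sierpinski_adj G n x w"
    then obtain z where z: "z \<in> sierpinski_verts L n" "sierpinski_adj G n z u" "sierpinski_adj G n z w" by blast
    have "f u \<noteq> f w"
      by (rule pairwise[OF n irr _ _ _ _ _ z(2,3) HA HB])
         (use z(1) u w uw in \<open>auto simp: sierpinski_verts_def\<close>)
    then show False using uw by simp
  qed
qed


lemma hscheme:
  assumes n: "n \<ge> 2" and irr: "\<forall>a. \<not> G a a"
    and hr: "\<forall>e x. h e x < 3"
    and hA: "\<forall>e b c1 c2. e \<in> L \<longrightarrow> G b c1 \<longrightarrow> G b c2 \<longrightarrow> c1 \<noteq> c2 \<longrightarrow> h e c1 \<noteq> h e c2"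
    and hB1: "\<forall>a b c. G a b \<longrightarrow> G b c \<longrightarrow> h b a \<noteq> h a c"
    and hB2: "\<forall>a b c. G a b \<longrightarrow> G b c \<longrightarrow> h a a \<noteq> h b c"
  shows "injective_coloring (sierpinski_verts L n) (sierpinski_adj G n) 3 (\<lambda>u. h (rev u ! 1) (rev u ! 0) + 1)"
proof (rule generic)
  show "n \<ge> 2" by (rule n)
  show "\<forall>a. \<not> G a a" by (rule irr)
  show "\<forall>v\<in>sierpinski_verts L n. h (rev v ! 1) (rev v ! 0) + 1 \<in> {1..3}"
    using hr by (auto simp: Suc_le_eq)
  show "\<forall>w b c1 c2. length w + 1 = n \<longrightarrow> set w \<subseteq> L \<longrightarrow> G b c1 \<longrightarrow> G b c2 \<longrightarrow> c1 \<noteq> c2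
      \<longrightarrow> h (rev (w @ [c1]) ! 1) (rev (w @ [c1]) ! 0) + 1 \<noteq> h (rev (w @ [c2]) ! 1) (rev (w @ [c2]) ! 0) + 1"
  proof (intro allI impI)
    fix w b c1 c2 assume lw: "length w + 1 = n" and sw: "set w \<subseteq> L" and g: "G b c1" "G b c2" and ne: "c1 \<noteq> c2"
    have "w \<noteq> []" using lw n by auto
    then have "rev w ! 0 \<in> L" using sw by (metis length_greater_0_conv length_rev nth_mem set_rev subsetD)
    then show "h (rev (w @ [c1]) ! 1) (rev (w @ [c1]) ! 0) + 1 \<noteq> h (rev (w @ [c2]) ! 1) (rev (w @ [c2]) ! 0) + 1"
      using hA g ne by simp
  qed
  show "\<forall>P a b c j. length P + 1 + j = n \<longrightarrow> 1 \<le> j \<longrightarrow> set P \<subseteq> L \<longrightarrow> G a b \<longrightarrow> G b c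
      \<longrightarrow> h (rev (P @ b # replicate j a) ! 1) (rev (P @ b # replicate j a) ! 0) + 1 \<noteq>
          h (rev (P @ a # replicate (j - 1) b @ [c]) ! 1) (rev (P @ a # replicate (j - 1) b @ [c]) ! 0) + 1"
  proof (intro allI impI)
    fix P a b c j assume "length P + 1 + j = n" "1 \<le> j" "set P \<subseteq> L" and g: "G a b" "G b c"
    show "h (rev (P @ b # replicate j a) ! 1) (rev (P @ b # replicate j a) ! 0) + 1 \<noteq>
          h (rev (P @ a # replicate (j - 1) b @ [c]) ! 1) (rev (P @ a # replicate (j - 1) b @ [c]) ! 0) + 1"
    proof (cases "j = 1")
      case True then show ?thesis using hB1 g by simp
    next
      case False
      then obtain m where m: "j = Suc (Suc m)" using \<open>1 \<le> j\<close> by (metis One_nat_def Suc_le_D not_less_eq_eq le_antisym)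
      have r: "rev (replicate j a) = a # a # replicate m a" "rev (replicate (j-1) b) = b # replicate m b"
        unfolding rev_replicate using m by (simp_all only: replicate_Suc diff_Suc_1)
      have e1: "rev (P @ b # replicate j a) = a # a # (replicate m a @ b # rev P)"
        by (simp only: rev_append rev.simps r(1) append_Cons append_assoc append_Nil)
      have e2: "rev (P @ a # replicate (j - 1) b @ [c]) = c # b # (replicate m b @ a # rev P)"
        by (simp only: rev_append rev.simps r(2) append_Cons append_assoc append_Nil)
      show ?thesis unfolding e1 e2 nth_Cons_0 nth_Cons_Suc using hB2 g by simp
    qed
  qed
qed

definition sc :: "nat \<Rightarrow> nat \<Rightarrow> nat" where "sc k t = (if t + 1 = k then 0 else t + 1)"
definition pr :: "nat \<Rightarrow> nat \<Rightarrow> nat" where "pr k t = (if t = 0 then k - 1 else t - 1)"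
definition dst :: "nat \<Rightarrow> nat \<Rightarrow> nat \<Rightarrow> nat" where "dst k e x = (if e \<le> x then x - e else x + k - e)"
definition rr :: "nat \<Rightarrow> nat \<Rightarrow> nat" where
  "rr k t = (if t = 0 then 0 else if k - 2 \<le> t then 2 else if even ((t - 1) div 2) then 1 else 0)"

lemma modsc: "a < k \<Longrightarrow> (a + 1) mod k = sc k a"
  unfolding sc_def by auto

lemma cyc_adj: "k \<ge> 3 \<Longrightarrow> cycle_adj k a b \<longleftrightarrow> a < k \<and> b < k \<and> (b = sc k a \<or> b = pr k a)"
proof (cases "a < k \<and> b < k")
  case True
  assume k: "k \<ge> 3"
  have "cycle_adj k a b \<longleftrightarrow> a \<noteq> b \<and> (b = sc k a \<or> a = sc k b)"
    unfolding cycle_adj_def using True modsc[of a k] modsc[of b k] by auto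
  also have "\<dots> \<longleftrightarrow> (b = sc k a \<or> b = pr k a)"
    using True k unfolding sc_def pr_def by auto
  finally show ?thesis using True by simp
next
  case False then show ?thesis unfolding cycle_adj_def by auto
qed

lemma rr_A: "k \<ge> 5 \<Longrightarrow> t < k \<Longrightarrow> rr k (sc k t) \<noteq> rr k (pr k t)"
proof -
  assume k: "k \<ge> 5" and t: "t < k"
  consider "t = 0" | "t = k - 1" | "t = 1" | "t \<ge> k - 3" "t \<ge> 2" "t < k - 1" | "2 \<le> t" "t < k - 3" using t k by linarith
  then show ?thesis
  proof cases
    case 5
    then have "even ((t+1-1) div 2) \<longleftrightarrow> \<not> even ((t - 1 - 1) div 2)" by presburger
    then show ?thesis using 5 k unfolding rr_def sc_def pr_def by auto
  qed (use k in \<open>auto simp: rr_def sc_def pr_def\<close>)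
qed

lemma dst_sc: "e < k \<Longrightarrow> b < k \<Longrightarrow> dst k e (sc k b) = sc k (dst k e b)"
  unfolding dst_def sc_def by auto
lemma dst_pr: "e < k \<Longrightarrow> b < k \<Longrightarrow> dst k e (pr k b) = pr k (dst k e b)"
  unfolding dst_def pr_def by auto
lemma dst_lt: "e < k \<Longrightarrow> b < k \<Longrightarrow> dst k e b < k"
  unfolding dst_def by auto
lemma dst_self: "dst k e e = 0" unfolding dst_def by auto
lemma sc_pr: "t < k \<Longrightarrow> sc k (pr k t) = t" unfolding sc_def pr_def by auto
lemma pr_sc: "t < k \<Longrightarrow> pr k (sc k t) = t" unfolding sc_def pr_def by auto
lemma sc_lt: "t < k \<Longrightarrow> sc k t < k" unfolding sc_def by auto
lemma pr_lt: "t < k \<Longrightarrow> pr k t < k" unfolding pr_def by auto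


definition h5 :: "nat \<Rightarrow> nat \<Rightarrow> nat \<Rightarrow> nat" where "h5 k e x = rr k (dst k e x)"

lemma rr_vals: "k \<ge> 5 \<Longrightarrow> rr k 0 = 0 \<and> rr k 1 = 1 \<and> rr k 2 = 1 \<and> rr k (k-1) = 2 \<and> rr k (k-2) = 2"
  unfolding rr_def by auto

lemma dst_vals: "k \<ge> 3 \<Longrightarrow> b < k \<Longrightarrow>
   dst k b (sc k b) = 1 \<and> dst k b (pr k b) = k - 1 \<and> dst k b (sc k (sc k b)) = 2 \<and> dst k b (pr k (pr k b)) = k - 2"
  unfolding dst_def sc_def pr_def by auto

lemma h5_props:
  assumes k: "k \<ge> 5"
  shows "\<forall>e x. h5 k e x < 3"
    and "\<forall>e b c1 c2. e \<in> {0..<k} \<longrightarrow> cycle_adj k b c1 \<longrightarrow> cycle_adj k b c2 \<longrightarrow> c1 \<noteq> c2 \<longrightarrow> h5 k e c1 \<noteq> h5 k e c2"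
    and "\<forall>a b c. cycle_adj k a b \<longrightarrow> cycle_adj k b c \<longrightarrow> h5 k b a \<noteq> h5 k a c"
    and "\<forall>a b c. cycle_adj k a b \<longrightarrow> cycle_adj k b c \<longrightarrow> h5 k a a \<noteq> h5 k b c"
proof -
  have k3: "k \<ge> 3" using k by simp
  show "\<forall>e x. h5 k e x < 3" unfolding h5_def rr_def by auto
  show "\<forall>e b c1 c2. e \<in> {0..<k} \<longrightarrow> cycle_adj k b c1 \<longrightarrow> cycle_adj k b c2 \<longrightarrow> c1 \<noteq> c2 \<longrightarrow> h5 k e c1 \<noteq> h5 k e c2"
  proof (intro allI impI)
    fix e b c1 c2 assume e: "e \<in> {0..<k}" and g: "cycle_adj k b c1" "cycle_adj k b c2" and ne: "c1 \<noteq> c2"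
    have b: "b < k" using g cyc_adj[OF k3] by auto
    have t: "dst k e b < k" using dst_lt e b by auto
    have A: "h5 k e (sc k b) \<noteq> h5 k e (pr k b)"
      unfolding h5_def using dst_sc[of e k b] dst_pr[of e k b] e b rr_A[OF k t] by auto
    have "(c1 = sc k b \<and> c2 = pr k b) \<or> (c1 = pr k b \<and> c2 = sc k b)"
      using g ne cyc_adj[OF k3] by auto
    then show "h5 k e c1 \<noteq> h5 k e c2" using A by metis
  qed
  show "\<forall>a b c. cycle_adj k a b \<longrightarrow> cycle_adj k b c \<longrightarrow> h5 k b a \<noteq> h5 k a c"
  proof (intro allI impI)
    fix a b c assume g: "cycle_adj k a b" "cycle_adj k b c"
    have ab: "a < k" "b < k" "c < k" using g cyc_adj[OF k3] by auto
    consider "b = sc k a" | "b = pr k a" using g cyc_adj[OF k3] by auto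
    then show "h5 k b a \<noteq> h5 k a c"
    proof cases
      case 1
      then have a: "a = pr k b" using pr_sc ab by auto
      have "h5 k b a = 2" unfolding h5_def a using dst_vals[OF k3 ab(2)] rr_vals[OF k] by simp
      moreover have "c = sc k b \<or> c = pr k b" using g cyc_adj[OF k3] by auto
      then have "c = sc k (sc k a) \<or> c = a" using 1 a by metis
      then have "h5 k a c \<noteq> 2" unfolding h5_def using dst_vals[OF k3 ab(1)] rr_vals[OF k] dst_self[of k a]
        by auto
      ultimately show ?thesis by simp
    next
      case 2
      then have a: "a = sc k b" using sc_pr ab by auto
      have "h5 k b a = 1" unfolding h5_def a using dst_vals[OF k3 ab(2)] rr_vals[OF k] by simp
      moreover have "c = sc k b \<or> c = pr k b" using g cyc_adj[OF k3] by auto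
      then have "c = pr k (pr k a) \<or> c = a" using 2 a by metis
      then have "h5 k a c \<noteq> 1" unfolding h5_def using dst_vals[OF k3 ab(1)] rr_vals[OF k] dst_self[of k a]
        by auto
      ultimately show ?thesis by simp
    qed
  qed
  show "\<forall>a b c. cycle_adj k a b \<longrightarrow> cycle_adj k b c \<longrightarrow> h5 k a a \<noteq> h5 k b c"
  proof (intro allI impI)
    fix a b c assume g: "cycle_adj k a b" "cycle_adj k b c"
    have ab: "b < k" using g cyc_adj[OF k3] by auto
    have "c = sc k b \<or> c = pr k b" using g cyc_adj[OF k3] by auto
    then have "h5 k b c \<noteq> 0" unfolding h5_def using dst_vals[OF k3 ab] rr_vals[OF k]
      by auto
    moreover have "h5 k a a = 0" unfolding h5_def by (simp add: dst_self rr_def)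
    ultimately show "h5 k a a \<noteq> h5 k b c" by simp
  qed
qed

definition h4 :: "nat \<Rightarrow> nat \<Rightarrow> nat" where
  "h4 e x = (if e < 4 \<and> x < 4 then [[0,0,1,1],[2,2,1,1],[2,0,0,1],[2,0,1,2::nat]] ! e ! x else 0)"

lemma all4: "(\<forall>a<(4::nat). P a) \<longleftrightarrow> P 0 \<and> P 1 \<and> P 2 \<and> P 3"
  by (auto simp: numeral_eq_Suc less_Suc_eq)

lemma adj4: "cycle_adj 4 a b \<Longrightarrow> a < 4 \<and> b < 4" unfolding cycle_adj_def by auto

lemma h4_props:
  shows "\<forall>e x. h4 e x < 3"
    and "\<forall>e b c1 c2. e \<in> {0..<4} \<longrightarrow> cycle_adj 4 b c1 \<longrightarrow> cycle_adj 4 b c2 \<longrightarrow> c1 \<noteq> c2 \<longrightarrow> h4 e c1 \<noteq> h4 e c2"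
    and "\<forall>a b c. cycle_adj 4 a b \<longrightarrow> cycle_adj 4 b c \<longrightarrow> h4 b a \<noteq> h4 a c"
    and "\<forall>a b c. cycle_adj 4 a b \<longrightarrow> cycle_adj 4 b c \<longrightarrow> h4 a a \<noteq> h4 b c"
proof -
  have t: "\<forall>e<4. \<forall>x<4. h4 e x < 3" unfolding all4 by (simp add: h4_def)
  then show "\<forall>e x. h4 e x < 3" by (auto simp: h4_def)
  have "\<forall>e<4. \<forall>b<4. \<forall>c1<4. \<forall>c2<4. cycle_adj 4 b c1 \<longrightarrow> cycle_adj 4 b c2 \<longrightarrow> c1 \<noteq> c2 \<longrightarrow> h4 e c1 \<noteq> h4 e c2"
    unfolding all4 by (simp add: h4_def cycle_adj_def)
  then show "\<forall>e b c1 c2. e \<in> {0..<4} \<longrightarrow> cycle_adj 4 b c1 \<longrightarrow> cycle_adj 4 b c2 \<longrightarrow> c1 \<noteq> c2 \<longrightarrow> h4 e c1 \<noteq> h4 e c2"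
    using adj4 by (metis atLeastLessThan_iff)
  have "\<forall>a<4. \<forall>b<4. \<forall>c<4. cycle_adj 4 a b \<longrightarrow> cycle_adj 4 b c \<longrightarrow> h4 b a \<noteq> h4 a c"
    unfolding all4 by (simp add: h4_def cycle_adj_def)
  then show "\<forall>a b c. cycle_adj 4 a b \<longrightarrow> cycle_adj 4 b c \<longrightarrow> h4 b a \<noteq> h4 a c"
    using adj4 by blast
  have "\<forall>a<4. \<forall>b<4. \<forall>c<4. cycle_adj 4 a b \<longrightarrow> cycle_adj 4 b c \<longrightarrow> h4 a a \<noteq> h4 b c"
    unfolding all4 by (simp add: h4_def cycle_adj_def)
  then show "\<forall>a b c. cycle_adj 4 a b \<longrightarrow> cycle_adj 4 b c \<longrightarrow> h4 a a \<noteq> h4 b c"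
    using adj4 by blast
qed

fun col3 :: "nat list \<Rightarrow> nat" where
  "col3 [] = 0"
| "col3 [b] = b mod 3"
| "col3 (x # y # ys) = (6 - x mod 3 - col3 (y # ys)) mod 3"

lemma all3: "(\<forall>a<(3::nat). P a) \<longleftrightarrow> P 0 \<and> P 1 \<and> P 2"
  by (auto simp: numeral_eq_Suc less_Suc_eq)

lemma col3_lt: "col3 v < 3"
  by (induction v rule: col3.induct) auto

lemma col3_cons: "v \<noteq> [] \<Longrightarrow> col3 (x # v) = (6 - x mod 3 - col3 v) mod 3"
  by (cases v) auto

lemma step_inj0: "\<forall>m<3. \<forall>p<3. \<forall>q<(3::nat). p \<noteq> q \<longrightarrow> (6 - m - p) mod 3 \<noteq> (6 - m - q) mod 3"
  unfolding all3 by simp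


lemma col3_prefix:
  assumes "v1 \<noteq> []" "v2 \<noteq> []" "col3 v1 \<noteq> col3 v2"
  shows "col3 (P @ v1) \<noteq> col3 (P @ v2)"
  using assms
proof (induction P)
  case Nil then show ?case by simp
next
  case (Cons x P)
  have "col3 (P @ v1) \<noteq> col3 (P @ v2)" using Cons by simp
  moreover have "x mod 3 < 3" by simp
  ultimately have "(6 - x mod 3 - col3 (P @ v1)) mod 3 \<noteq> (6 - x mod 3 - col3 (P @ v2)) mod 3"
    using step_inj0 col3_lt by blast
  then show ?case using Cons.prems col3_cons[of "P @ v1" x] col3_cons[of "P @ v2" x] by simp
qed

lemma ar1: "\<forall>a<(3::nat). (6 - a mod 3 - a) mod 3 = a" unfolding all3 by simp

lemma col3_rep: "a < 3 \<Longrightarrow> col3 (replicate (Suc m) a) = a"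
proof (induction m)
  case 0 then show ?case by simp
next
  case (Suc m)
  then show ?case using col3_cons[of "replicate (Suc m) a" a] ar1 by simp
qed

lemma ar2: "\<forall>b<(3::nat). \<forall>c<3. (6 - b mod 3 - c) mod 3 = (6 - b - c) mod 3 \<and> (6 - b mod 3 - (6 - b - c) mod 3) mod 3 = c"
  unfolding all3 by simp

lemma col3_repc: "b < 3 \<Longrightarrow> c < 3 \<Longrightarrow> col3 (replicate m b @ [c]) = c \<or> col3 (replicate m b @ [c]) = (6 - b - c) mod 3"
proof (induction m)
  case 0 then show ?case by simp
next
  case (Suc m)
  have "col3 (replicate (Suc m) b @ [c]) = (6 - b mod 3 - col3 (replicate m b @ [c])) mod 3"
    using col3_cons[of "replicate m b @ [c]" b] by simp
  then show ?case using Suc ar2 by auto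
qed

lemma ar3: "\<forall>a<(3::nat). \<forall>b<3. \<forall>c<3. a \<noteq> b \<longrightarrow> b \<noteq> c \<longrightarrow>
   (6 - a mod 3 - c) mod 3 \<noteq> (6 - b mod 3 - a) mod 3 \<and> (6 - a mod 3 - (6 - b - c) mod 3) mod 3 \<noteq> (6 - b mod 3 - a) mod 3"
  unfolding all3 by simp

lemma col3_B:
  assumes a: "a < 3" "b < 3" "c < 3" "a \<noteq> b" "b \<noteq> c" "j \<ge> 1"
  shows "col3 (P @ b # replicate j a) \<noteq> col3 (P @ a # replicate (j-1) b @ [c])"
proof (rule col3_prefix)
  show "b # replicate j a \<noteq> []" "a # replicate (j-1) b @ [c] \<noteq> []" by auto
  obtain m where m: "j = Suc m" using a(6) by (cases j) auto
  have l: "col3 (b # replicate j a) = (6 - b mod 3 - a) mod 3"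
    using col3_cons[of "replicate j a" b] col3_rep[of a m] a m by simp
  have r: "col3 (a # replicate (j-1) b @ [c]) = (6 - a mod 3 - col3 (replicate (j-1) b @ [c])) mod 3"
    using col3_cons[of "replicate (j-1) b @ [c]" a] by simp
  show "col3 (b # replicate j a) \<noteq> col3 (a # replicate (j - 1) b @ [c])"
    unfolding l r using col3_repc[of b c "j-1"] a ar3 by metis
qed


lemma lower:
  assumes n: "n \<ge> 2" and k: "k \<ge> 3"
    and col: "injective_coloring (sierpinski_verts {0..<k} n) (sierpinski_adj (cycle_adj k) n) m f"
  shows "3 \<le> m"
proof -
  obtain p where p: "n = Suc (Suc p)" using n by (metis add_2_eq_Suc le_Suc_ex)
  define z where "z = 0 # replicate (Suc p) (1::nat)"
  define x1 where "x1 = 1 # replicate (Suc p) (0::nat)"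
  define x2 where "x2 = 0 # replicate p (1::nat) @ [0]"
  define x3 where "x3 = 0 # replicate p (1::nat) @ [2]"
  have a01: "cycle_adj k 0 1" "cycle_adj k 1 0" "cycle_adj k 1 2" using k unfolding cycle_adj_def by auto
  let ?V = "sierpinski_verts {0..<k} n"
  let ?E = "sierpinski_adj (cycle_adj k) n"
  have zV: "z \<in> ?V" and x1V: "x1 \<in> ?V" and x2V: "x2 \<in> ?V" and x3V: "x3 \<in> ?V"
    using k p by (auto simp: sierpinski_verts_def z_def x1_def x2_def x3_def)
  have e1: "?E z x1"
    unfolding sierpinski_adj_def
  proof (intro conjI exI[of _ 0])
    show "\<forall>i. 0 < i \<and> i < n \<longrightarrow> z ! i = x1 ! 0 \<and> x1 ! i = z ! 0"
      using p by (auto simp: z_def x1_def nth_Cons')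
  qed (use p a01 in \<open>auto simp: z_def x1_def\<close>)
  have zi: "\<forall>i<Suc p. z ! i = x2 ! i \<and> z ! i = x3 ! i"
    by (auto simp: z_def x2_def x3_def nth_Cons' nth_append)
  have zl: "z ! Suc p = 1" "x2 ! Suc p = 0" "x3 ! Suc p = 2"
    by (simp_all add: z_def x2_def x3_def nth_append nth_Cons')
  have e2: "?E z x2"
    unfolding sierpinski_adj_def
    by (rule conjI, use p in \<open>simp add: z_def\<close>, rule conjI, use p in \<open>simp add: x2_def\<close>,
        rule exI[of _ "Suc p"]) (use p zi zl a01 in auto)
  have e3: "?E z x3"
    unfolding sierpinski_adj_def
    by (rule conjI, use p in \<open>simp add: z_def\<close>, rule conjI, use p in \<open>simp add: x3_def\<close>,
        rule exI[of _ "Suc p"]) (use p zi zl a01 in auto)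
  have d12: "x1 \<noteq> x2" "x1 \<noteq> x3" "x2 \<noteq> x3" using zl by (auto simp: x1_def x2_def x3_def)
  have r: "\<forall>v\<in>?V. f v \<in> {1..m}" and inj: "\<forall>u\<in>?V. \<forall>w\<in>?V. u \<noteq> w \<and> f u = f w \<longrightarrow> \<not> (\<exists>x\<in>?V. ?E x u \<and> ?E x w)"
    using col unfolding injective_coloring_def by blast+
  have "f x1 \<noteq> f x2" using inj x1V x2V zV e1 e2 d12 by blast
  moreover have "f x1 \<noteq> f x3" using inj x1V x3V zV e1 e3 d12 by blast
  moreover have "f x2 \<noteq> f x3" using inj x2V x3V zV e2 e3 d12 by blast
  moreover have "f x1 \<in> {1..m}" "f x2 \<in> {1..m}" "f x3 \<in> {1..m}" using r x1V x2V x3V by auto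
  ultimately show ?thesis by auto
qed

lemma upper:
  assumes n: "n \<ge> 2" and k: "k \<ge> 3"
  shows "\<exists>f. injective_coloring (sierpinski_verts {0..<k} n) (sierpinski_adj (cycle_adj k) n) 3 f"
proof -
  have irr: "\<forall>a. \<not> cycle_adj k a a" unfolding cycle_adj_def by auto
  consider "k = 3" | "k = 4" | "k \<ge> 5" using k by linarith
  then show ?thesis
  proof cases
    case 1
    have "injective_coloring (sierpinski_verts {0..<k} n) (sierpinski_adj (cycle_adj k) n) 3 (\<lambda>u. col3 u + 1)"
    proof (rule generic)
      show "n \<ge> 2" by (rule n)
      show "\<forall>a. \<not> cycle_adj k a a" by (rule irr)
      show "\<forall>v\<in>sierpinski_verts {0..<k} n. col3 v + 1 \<in> {1..3}" using col3_lt by (auto simp: Suc_le_eq)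
      show "\<forall>w b c1 c2. length w + 1 = n \<longrightarrow> set w \<subseteq> {0..<k} \<longrightarrow> cycle_adj k b c1 \<longrightarrow> cycle_adj k b c2 \<longrightarrow> c1 \<noteq> c2
          \<longrightarrow> col3 (w @ [c1]) + 1 \<noteq> col3 (w @ [c2]) + 1"
      proof (intro allI impI)
        fix w b c1 c2 assume "length w + 1 = n" "set w \<subseteq> {0..<k}" "cycle_adj k b c1" "cycle_adj k b c2" "c1 \<noteq> c2"
        then have "c1 < 3" "c2 < 3" "c1 \<noteq> c2" using 1 unfolding cycle_adj_def by auto
        then have "col3 [c1] \<noteq> col3 [c2]" by simp
        then show "col3 (w @ [c1]) + 1 \<noteq> col3 (w @ [c2]) + 1" using col3_prefix[of "[c1]" "[c2]" w] by simp
      qed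
      show "\<forall>P a b c j. length P + 1 + j = n \<longrightarrow> 1 \<le> j \<longrightarrow> set P \<subseteq> {0..<k} \<longrightarrow> cycle_adj k a b \<longrightarrow> cycle_adj k b c
          \<longrightarrow> col3 (P @ b # replicate j a) + 1 \<noteq> col3 (P @ a # replicate (j - 1) b @ [c]) + 1"
      proof (intro allI impI)
        fix P a b c and j :: nat assume "length P + 1 + j = n" "1 \<le> j" "set P \<subseteq> {0..<k}" "cycle_adj k a b" "cycle_adj k b c"
        then have "a < 3" "b < 3" "c < 3" "a \<noteq> b" "b \<noteq> c" using 1 unfolding cycle_adj_def by auto
        then show "col3 (P @ b # replicate j a) + 1 \<noteq> col3 (P @ a # replicate (j - 1) b @ [c]) + 1"
          using col3_B[of a b c j P] \<open>1 \<le> j\<close> by simp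
      qed
    qed
    then show ?thesis by blast
  next
    case 2
    show ?thesis using hscheme[where n=n and G="cycle_adj k" and h=h4 and L="{0..<k}", OF n irr] h4_props 2 by blast
  next
    case 3
    show ?thesis using hscheme[where n=n and G="cycle_adj k" and h="h5 k" and L="{0..<k}", OF n irr] h5_props[OF 3] by blast
  qed
qed

theorem mainTheorem3:
  fixes n k :: nat
  assumes "n \<ge> 2" and "k \<ge> 3"
  shows "injective_chromatic_number (sierpinski_verts (cycle_verts k) n)
           (sierpinski_adj (cycle_adj k) n) = 3"
  unfolding injective_chromatic_number_def cycle_verts_def
proof (rule Least_equality)
  show "\<exists>f. injective_coloring (sierpinski_verts {0..<k} n) (sierpinski_adj (cycle_adj k) n) 3 f"
    by (rule upper[OF assms])
  fix m assume "\<exists>f. injective_coloring (sierpinski_verts {0..<k} n) (sierpinski_adj (cycle_adj k) n) m f"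
  then show "3 \<le> m" using lower[OF assms] by blast
qed

end
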